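(* Let $S$ be a semigroup with finite $\mathcal{R}$-height, and let $B$ be a bi-ideal of $S$. Then $\mathrm{H}_{\mathcal{R}}(B)\leq 3\,\mathrm{H}_{\mathcal{R}}(S)-1$.
   Context: For a semigroup $S$, $S^1$ denotes $S$ with an identity adjoined if necessary. Green's preorder: $a\leq_{\mathcal{R}} b$ iff $aS^1\subseteq bS^1$; $\mathcal{R}$ is the associated equivalence; the $\mathcal{R}$-height $\mathrm{H}_{\mathcal{R}}$ of a semigroup is the supremum of the cardinalities of chains in its poset of $\mathcal{R}$-classes. A bi-ideal of $S$ is a non-empty subset $B$ with $BS^1B\subseteq B$; $\mathrm{H}_{\mathcal{R}}(B)$ is computed in the semigroup $B$ itself. *)

theory Defs
  imports Main "HOL-Library.Extended_Nat"
begin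

text \<open>Green's R-preorder computed inside a subsemigroup A (of an ambient semigroup type):
  a \<le>R b iff a \<in> b A^1, i.e. a = b or a = b x for some x in A.\<close>
definition R_le :: "'a::semigroup_mult set \<Rightarrow> 'a \<Rightarrow> 'a \<Rightarrow> bool" where
  "R_le A a b \<longleftrightarrow> a = b \<or> (\<exists>x\<in>A. a = b * x)"

definition R_equiv :: "'a::semigroup_mult set \<Rightarrow> 'a \<Rightarrow> 'a \<Rightarrow> bool" where
  "R_equiv A a b \<longleftrightarrow> R_le A a b \<and> R_le A b a"

definition R_class :: "'a::semigroup_mult set \<Rightarrow> 'a \<Rightarrow> 'a set" where
  "R_class A a = {b\<in>A. R_equiv A a b}"

definition R_classes :: "'a::semigroup_mult set \<Rightarrow> 'a set set" where
  "R_classes A = R_class A ` A"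

definition R_class_le :: "'a::semigroup_mult set \<Rightarrow> 'a set \<Rightarrow> 'a set \<Rightarrow> bool" where
  "R_class_le A X Y \<longleftrightarrow> (\<exists>a\<in>X. \<exists>b\<in>Y. R_le A a b)"

definition R_chain :: "'a::semigroup_mult set \<Rightarrow> 'a set set \<Rightarrow> bool" where
  "R_chain A K \<longleftrightarrow> K \<subseteq> R_classes A \<and>
     (\<forall>X\<in>K. \<forall>Y\<in>K. R_class_le A X Y \<or> R_class_le A Y X)"

definition R_height :: "'a::semigroup_mult set \<Rightarrow> enat" where
  "R_height A = Sup {(if finite K then enat (card K) else \<infinity>) | K. R_chain A K}"

definition bi_ideal :: "'a::semigroup_mult set \<Rightarrow> 'a set \<Rightarrow> bool" where
  "bi_ideal S B \<longleftrightarrow> B \<noteq> {} \<and> B \<subseteq> S \<and>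
     (\<forall>b\<in>B. \<forall>c\<in>B. b * c \<in> B \<and> (\<forall>s\<in>S. b * s * c \<in> B))"

end

theory Submission
  imports Defs
begin

definition closedm :: "'a::semigroup_mult set \<Rightarrow> bool" where
  "closedm A \<longleftrightarrow> (\<forall>x\<in>A. \<forall>y\<in>A. x * y \<in> A)"

lemma closedm_UNIV: "closedm UNIV" by (simp add: closedm_def)

lemma R_le_refl: "R_le A a a" by (simp add: R_le_def)

lemma R_le_trans:
  assumes "closedm A" "R_le A a b" "R_le A b c" shows "R_le A a c"
  using assms unfolding R_le_def closedm_def
  by (elim disjE bexE; simp add: mult.assoc; blast)

lemma R_le_UNIV: "R_le A a b \<Longrightarrow> R_le UNIV a b"
  unfolding R_le_def by blast

lemma R_class_eq_iff:
  assumes "closedm A" "a \<in> A" "b \<in> A"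
  shows "R_class A a = R_class A b \<longleftrightarrow> R_equiv A a b"
proof
  assume "R_class A a = R_class A b"
  then have "b \<in> R_class A a" using assms by (auto simp: R_class_def R_equiv_def R_le_refl)
  then show "R_equiv A a b" by (simp add: R_class_def)
next
  assume "R_equiv A a b"
  then show "R_class A a = R_class A b"
    using assms(1) unfolding R_class_def R_equiv_def by (blast intro: R_le_trans)
qed

lemma mem_R_class: "a \<in> A \<Longrightarrow> a \<in> R_class A a"
  by (simp add: R_class_def R_equiv_def R_le_refl)

lemma finite_max0:
  "finite F \<Longrightarrow> F \<noteq> {} \<Longrightarrow> (\<forall>x\<in>F. \<forall>y\<in>F. le x y \<or> le y x) \<longrightarrow>
    (\<forall>x\<in>F. \<forall>y\<in>F. \<forall>z\<in>F. le x y \<longrightarrow> le y z \<longrightarrow> le x z) \<longrightarrow> (\<exists>m\<in>F. \<forall>x\<in>F. le x m)"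
proof (induction F rule: finite_ne_induct)
  case (singleton x)
  then show ?case by blast
next
  case (insert x F)
  show ?case
  proof (intro impI)
    assume t: "\<forall>u\<in>insert x F. \<forall>v\<in>insert x F. le u v \<or> le v u"
      and tr: "\<forall>u\<in>insert x F. \<forall>v\<in>insert x F. \<forall>w\<in>insert x F. le u v \<longrightarrow> le v w \<longrightarrow> le u w"
    have t': "\<forall>u\<in>F. \<forall>v\<in>F. le u v \<or> le v u" using t by blast
    have tr': "\<forall>u\<in>F. \<forall>v\<in>F. \<forall>w\<in>F. le u v \<longrightarrow> le v w \<longrightarrow> le u w" using tr by blast
    obtain m where m: "m \<in> F" "\<forall>y\<in>F. le y m" using insert.IH t' tr' by blast
    show "\<exists>m\<in>insert x F. \<forall>y\<in>insert x F. le y m"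
    proof (cases "le x m")
      case True then show ?thesis using m by blast
    next
      case False
      then have mx: "le m x" using t m(1) by blast
      have xx: "le x x" using t by blast
      have "\<forall>y\<in>insert x F. le y x"
        using m mx xx tr by blast
      then show ?thesis by blast
    qed
  qed
qed

lemma finite_max:
  assumes "finite F" "F \<noteq> {}" "\<And>x y. x \<in> F \<Longrightarrow> y \<in> F \<Longrightarrow> le x y \<or> le y x"
    "\<And>x y z. x \<in> F \<Longrightarrow> y \<in> F \<Longrightarrow> z \<in> F \<Longrightarrow> le x y \<Longrightarrow> le y z \<Longrightarrow> le x z"
  shows "\<exists>m\<in>F. \<forall>x\<in>F. le x m"
  using finite_max0[OF assms(1,2), of le] assms(3,4) by blast

lemma bi_closed: "bi_ideal UNIV B \<Longrightarrow> closedm B"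
  by (simp add: bi_ideal_def closedm_def)

lemma bi_mid: "bi_ideal UNIV B \<Longrightarrow> y \<in> B \<Longrightarrow> x \<in> B \<Longrightarrow> y * m * x \<in> B"
  by (simp add: bi_ideal_def)

lemma bi_mid0: "bi_ideal UNIV B \<Longrightarrow> y \<in> B \<Longrightarrow> x \<in> B \<Longrightarrow> y * x \<in> B"
  by (simp add: bi_ideal_def)

lemma R_le_strict: "R_le A b a \<Longrightarrow> b \<noteq> a \<Longrightarrow> \<exists>x\<in>A. b = a * x"
  unfolding R_le_def by blast

lemma R_leI: "x \<in> A \<Longrightarrow> b = a * x \<Longrightarrow> R_le A b a"
  unfolding R_le_def by blast

lemma key4:
  assumes bi: "bi_ideal UNIV B"
    and "b \<noteq> a" "R_le B b a" "c \<noteq> b" "R_le B c b" "d \<noteq> c" "R_le B d c" "R_le UNIV a d"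
  shows "R_le B b c"
proof -
  obtain x where x: "x \<in> B" "b = a * x" using R_le_strict[OF assms(3,2)] by blast
  obtain z where z: "z \<in> B" "d = c * z" using R_le_strict[OF assms(7,6)] by blast
  show ?thesis
  proof (cases "a = d")
    case True
    have "b = c * (z * x)" unfolding x(2) True z(2) by (simp add: mult.assoc)
    then show ?thesis using bi_mid0[OF bi z(1) x(1)] by (rule_tac R_leI)
  next
    case False
    then obtain s where s: "a = d * s" using assms(8) unfolding R_le_def by blast
    have "b = c * (z * s * x)" unfolding x(2) s z(2) by (simp add: mult.assoc)
    then show ?thesis using bi_mid[OF bi z(1) x(1)] by (rule_tac R_leI)
  qed
qed

lemma key3:
  assumes bi: "bi_ideal UNIV B"
    and "b \<noteq> a" "R_le B b a" "c \<noteq> b" "R_le B c b" "a \<noteq> c" "R_le UNIV a c" "R_le UNIV b c"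
    and minl: "\<forall>v. R_le UNIV v c \<longrightarrow> R_le UNIV c v"
  shows "R_le B b c"
proof -
  obtain x where x: "x \<in> B" "b = a * x" using R_le_strict[OF assms(3,2)] by blast
  obtain y where y: "y \<in> B" "c = b * y" using R_le_strict[OF assms(5,4)] by blast
  obtain s where s: "a = c * s" using R_le_strict[OF assms(7,6)] by blast
  obtain u where u: "b = c * u" using R_le_strict[OF assms(8)] assms(4) by auto
  have b1: "b = b * (y * s * x)"
  proof -
    have "b = c * s * x" using x(2) s by simp
    also have "\<dots> = b * y * s * x" using y(2) by simp
    finally show ?thesis by (simp add: mult.assoc)
  qed
  have "R_le UNIV (c * y) c" by (rule R_leI) auto
  then have "R_le UNIV c (c * y)" using minl by blast
  then consider "c = c * y" | t where "c = c * y * t" unfolding R_le_def by blast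
  then show ?thesis
  proof cases
    case 1
    have e: "b = c * y * u" using u arg_cong[OF 1, of "\<lambda>z. z * u"] by simp
    have "b = b * (y * s * x)" by (rule b1)
    also have "\<dots> = (c * y * u) * (y * s * x)" using e by simp
    also have "\<dots> = c * (y * (u * y * s) * x)" by (simp add: mult.assoc)
    finally have "b = c * (y * (u * y * s) * x)" .
    then show ?thesis using bi_mid[OF bi y(1) x(1)] by (rule_tac R_leI)
  next
    case (2 t)
    have e: "b = c * y * t * u" using u arg_cong[OF 2, of "\<lambda>z. z * u"] by simp
    have "b = b * (y * s * x)" by (rule b1)
    also have "\<dots> = (c * y * t * u) * (y * s * x)" using e by simp
    also have "\<dots> = c * (y * (t * u * y * s) * x)" by (simp add: mult.assoc)
    finally have "b = c * (y * (t * u * y * s) * x)" .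
    then show ?thesis using bi_mid[OF bi y(1) x(1)] by (rule_tac R_leI)
  qed
qed


definition schain :: "'a::semigroup_mult set \<Rightarrow> 'a set \<Rightarrow> bool" where
  "schain B E \<longleftrightarrow> E \<subseteq> B \<and> (\<forall>x\<in>E. \<forall>y\<in>E. R_le B x y \<or> R_le B y x) \<and>
     (\<forall>x\<in>E. \<forall>y\<in>E. R_le B x y \<longrightarrow> R_le B y x \<longrightarrow> x = y)"

lemma fiber3:
  assumes bi: "bi_ideal UNIV B" and sc: "schain B E" and fin: "finite E" and FE: "F \<subseteq> E"
    and same: "\<forall>x\<in>F. \<forall>y\<in>F. R_le UNIV x y"
  shows "card F \<le> 3"
proof (rule ccontr)
  assume "\<not> card F \<le> 3"
  then have c4: "card F \<ge> 4" by simp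
  have finF: "finite F" using fin FE finite_subset by blast
  have ne: "F \<noteq> {}" using c4 by auto
  have cl: "closedm B" using bi by (rule bi_closed)
    have tot: "\<And>x y. x \<in> F \<Longrightarrow> y \<in> F \<Longrightarrow> R_le B x y \<or> R_le B y x"
    using sc FE unfolding schain_def by blast
  have antis: "\<And>x y. x \<in> F \<Longrightarrow> y \<in> F \<Longrightarrow> R_le B x y \<Longrightarrow> R_le B y x \<Longrightarrow> x = y"
    using sc FE unfolding schain_def by blast
  have tr: "\<And>x y z. x \<in> F \<Longrightarrow> y \<in> F \<Longrightarrow> z \<in> F \<Longrightarrow> R_le B x y \<Longrightarrow> R_le B y z \<Longrightarrow> R_le B x z"
    using R_le_trans[OF cl] by blast
  obtain a where a: "a \<in> F" "\<forall>x\<in>F. R_le B x a"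
    using finite_max[OF finF ne, of "R_le B"] tot tr by blast
  obtain d where d: "d \<in> F" "\<forall>x\<in>F. R_le B d x"
    using finite_max[OF finF ne, of "\<lambda>x y. R_le B y x"] tot tr by blast
  let ?G = "F - {a, d}"
  have "F \<subseteq> ?G \<union> {a, d}" by blast
  then have "card F \<le> card (?G \<union> {a, d})" using finF by (simp add: card_mono)
  also have "\<dots> \<le> card ?G + card {a, d}" by (rule card_Un_le)
  also have "card {a, d} \<le> 2" by (simp add: card_insert_if)
  finally have cG: "card ?G \<ge> 2" using c4 by linarith
  then have "?G \<noteq> {}" by (intro notI) simp
  then obtain b where b: "b \<in> ?G" by blast
  have "card (?G - {b}) \<ge> 1" using cG b finF by simp
  then have "?G - {b} \<noteq> {}" by (intro notI) simp
  then obtain c where c: "c \<in> ?G - {b}" by blast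
  have main: "False" if "p \<in> ?G" "q \<in> ?G" "p \<noteq> q" "R_le B q p" for p q
  proof -
    have "R_le B p q"
    proof (rule key4[OF bi])
      show "p \<noteq> a" "R_le B p a" using that a by auto
      show "q \<noteq> p" "R_le B q p" using that by auto
      show "d \<noteq> q" "R_le B d q" using that d by auto
      show "R_le UNIV a d" using same a d by blast
    qed
    then show False using antis that by blast
  qed
  show False using tot[of b c] b c main[of b c] main[of c b] by auto
qed

lemma fiber2:
  assumes bi: "bi_ideal UNIV B" and sc: "schain B E" and fin: "finite E" and FE: "F \<subseteq> E"
    and same: "\<forall>x\<in>F. \<forall>y\<in>F. R_le UNIV x y"
    and minl: "\<forall>e\<in>F. \<forall>v. R_le UNIV v e \<longrightarrow> R_le UNIV e v"
  shows "card F \<le> 2"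
proof (rule ccontr)
  assume "\<not> card F \<le> 2"
  then have c3: "card F \<ge> 3" by simp
  have finF: "finite F" using fin FE finite_subset by blast
  have ne: "F \<noteq> {}" using c3 by auto
  have cl: "closedm B" using bi by (rule bi_closed)
  have tot: "\<And>x y. x \<in> F \<Longrightarrow> y \<in> F \<Longrightarrow> R_le B x y \<or> R_le B y x"
    using sc FE unfolding schain_def by blast
  have antis: "\<And>x y. x \<in> F \<Longrightarrow> y \<in> F \<Longrightarrow> R_le B x y \<Longrightarrow> R_le B y x \<Longrightarrow> x = y"
    using sc FE unfolding schain_def by blast
  have tr: "\<And>x y z. x \<in> F \<Longrightarrow> y \<in> F \<Longrightarrow> z \<in> F \<Longrightarrow> R_le B x y \<Longrightarrow> R_le B y z \<Longrightarrow> R_le B x z"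
    using R_le_trans[OF cl] by blast
  obtain a where a: "a \<in> F" "\<forall>x\<in>F. R_le B x a"
    using finite_max[OF finF ne, of "R_le B"] tot tr by blast
  obtain c where c: "c \<in> F" "\<forall>x\<in>F. R_le B c x"
    using finite_max[OF finF ne, of "\<lambda>x y. R_le B y x"] tot tr by blast
  let ?G = "F - {a, c}"
  have "F \<subseteq> ?G \<union> {a, c}" by blast
  then have "card F \<le> card (?G \<union> {a, c})" using finF by (simp add: card_mono)
  also have "\<dots> \<le> card ?G + card {a, c}" by (rule card_Un_le)
  also have "card {a, c} \<le> 2" by (simp add: card_insert_if)
  finally have cG: "card ?G \<ge> 1" using c3 by linarith
  then have "?G \<noteq> {}" by (intro notI) simp
  then obtain b where b: "b \<in> ?G" by blast
  have ac: "a \<noteq> c"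
  proof
    assume "a = c"
    then have "b = a" using antis[of b a] a c b by blast
    then show False using b by blast
  qed
  have "R_le B b c"
  proof (rule key3[OF bi])
    show "b \<noteq> a" "R_le B b a" using a b by auto
    show "c \<noteq> b" "R_le B c b" using c b by auto
    show "a \<noteq> c" by (rule ac)
    show "R_le UNIV a c" "R_le UNIV b c" using same a b c by auto
    show "\<forall>v. R_le UNIV v c \<longrightarrow> R_le UNIV c v" using minl c by blast
  qed
  then show False using antis[of b c] b c by blast
qed


lemma chain_img:
  assumes "\<forall>x\<in>X. \<forall>y\<in>X. R_le UNIV x y \<or> R_le UNIV y x"
  shows "R_chain UNIV (R_class UNIV ` X)"
  unfolding R_chain_def R_classes_def R_class_le_def
  using assms mem_R_class[of _ UNIV] by blast

lemma count:
  fixes B :: "'a::semigroup_mult set"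
  assumes bi: "bi_ideal UNIV B" and sc: "schain B E" and fin: "finite E"
    and hS: "\<forall>K. finite K \<longrightarrow> R_chain (UNIV :: 'a set) K \<longrightarrow> card K \<le> n"
  shows "card E \<le> 3 * n - 1"
proof (cases "E = {}")
  case True then show ?thesis by simp
next
  case ne: False
  define \<phi> where "\<phi> = R_class (UNIV :: 'a set)"
  define fib where "fib C = {e\<in>E. \<phi> e = C}" for C
  have cl: "closedm B" using bi by (rule bi_closed)
  have EB: "E \<subseteq> B" using sc by (simp add: schain_def)
  have tot: "\<And>x y. x \<in> E \<Longrightarrow> y \<in> E \<Longrightarrow> R_le B x y \<or> R_le B y x"
    using sc unfolding schain_def by blast
  have tr: "\<And>x y z. x \<in> E \<Longrightarrow> y \<in> E \<Longrightarrow> z \<in> E \<Longrightarrow> R_le B x y \<Longrightarrow> R_le B y z \<Longrightarrow> R_le B x z"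
    using R_le_trans[OF cl] by blast
  have totU: "\<forall>x\<in>E. \<forall>y\<in>E. R_le UNIV x y \<or> R_le UNIV y x"
    using tot R_le_UNIV[of B] by blast
  have chE: "R_chain UNIV (\<phi> ` E)" unfolding \<phi>_def by (rule chain_img[OF totU])
  have finI: "finite (\<phi> ` E)" using fin by simp
  have cI: "card (\<phi> ` E) \<le> n" using hS[rule_format, OF finI chE] .
  have cI1: "card (\<phi> ` E) \<ge> 1" using ne finI by (simp add: Suc_le_eq card_gt_0_iff)
  have phi_eq: "\<phi> x = \<phi> y \<longleftrightarrow> R_equiv UNIV x y" for x y
    unfolding \<phi>_def using R_class_eq_iff[OF closedm_UNIV] by blast
  have Eun: "E = \<Union>(fib ` (\<phi> ` E))" unfolding fib_def by blast
  have cardE: "card E = (\<Sum>C\<in>\<phi> ` E. card (fib C))"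
  proof -
    have "card (\<Union>(fib ` (\<phi> ` E))) = (\<Sum>C\<in>\<phi> ` E. card (fib C))"
    proof (rule card_UN_disjoint[OF finI])
      show "\<forall>i\<in>\<phi> ` E. finite (fib i)" unfolding fib_def using fin by simp
      show "\<forall>i\<in>\<phi> ` E. \<forall>j\<in>\<phi> ` E. i \<noteq> j \<longrightarrow> fib i \<inter> fib j = {}"
        unfolding fib_def by blast
    qed
    then show ?thesis by (simp only: Eun[symmetric])
  qed
  have fibE: "fib C \<subseteq> E" for C unfolding fib_def by blast
  have fib_same: "\<forall>x\<in>fib C. \<forall>y\<in>fib C. R_le UNIV x y" for C
    unfolding fib_def using phi_eq by (auto simp: R_equiv_def)
  have fib3: "card (fib C) \<le> 3" for C
    by (rule fiber3[OF bi sc fin fibE fib_same])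
  obtain m where m: "m \<in> E" "\<forall>x\<in>E. R_le B m x"
    using finite_max[OF fin ne, of "\<lambda>x y. R_le B y x"] tot tr by blast
  have sum3: "(\<Sum>C\<in>A. card (fib C)) \<le> 3 * card A" for A
    using sum_mono[of A "\<lambda>C. card (fib C)" "\<lambda>_. 3"] fib3 by simp
  show ?thesis
  proof (cases "\<exists>v. R_le UNIV v m \<and> \<not> R_le UNIV m v")
    case True
    then obtain v where v: "R_le UNIV v m" "\<not> R_le UNIV m v" by blast
    have vle: "R_le UNIV v e" if "e \<in> E" for e
      using R_le_trans[OF closedm_UNIV v(1) R_le_UNIV[of B m e]] m(2) that by blast
    have totU2: "\<forall>x\<in>insert v E. \<forall>y\<in>insert v E. R_le UNIV x y \<or> R_le UNIV y x"
      using totU vle R_le_refl[of UNIV] by (metis insert_iff)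
    have ch2: "R_chain UNIV (\<phi> ` insert v E)" unfolding \<phi>_def by (rule chain_img[OF totU2])
    have notin: "\<phi> v \<notin> \<phi> ` E"
    proof
      assume "\<phi> v \<in> \<phi> ` E"
      then obtain e where e: "e \<in> E" "\<phi> v = \<phi> e" by blast
      then have "R_le UNIV e v" using phi_eq by (simp add: R_equiv_def)
      moreover have "R_le UNIV m e" using m(2) e(1) R_le_UNIV[of B m e] by blast
      ultimately have "R_le UNIV m v" using R_le_trans[OF closedm_UNIV, of m e v] by blast
      then show False using v by blast
    qed
    have "card (\<phi> ` insert v E) \<le> n" using hS[rule_format, OF _ ch2] finI by simp
    then have "card (\<phi> ` E) + 1 \<le> n" using notin finI by simp
    then show ?thesis using cardE sum3[of "\<phi> ` E"] by linarith
  next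
    case False
    then have mn: "\<forall>v. R_le UNIV v m \<longrightarrow> R_le UNIV m v" by blast
    have mfib: "m \<in> fib (\<phi> m)" using m unfolding fib_def by blast
    have minl: "\<forall>e\<in>fib (\<phi> m). \<forall>v. R_le UNIV v e \<longrightarrow> R_le UNIV e v"
    proof (intro ballI allI impI)
      fix e v assume e: "e \<in> fib (\<phi> m)" and ve: "R_le UNIV v e"
      have em: "R_le UNIV e m" "R_le UNIV m e" using fib_same e mfib by blast+
      have "R_le UNIV v m" using R_le_trans[OF closedm_UNIV ve em(1)] .
      then have "R_le UNIV m v" using mn by blast
      then show "R_le UNIV e v" using R_le_trans[OF closedm_UNIV em(1)] by simp
    qed
    have f2: "card (fib (\<phi> m)) \<le> 2"
      by (rule fiber2[OF bi sc fin fibE fib_same minl])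
    have mI: "\<phi> m \<in> \<phi> ` E" using m by blast
    have "card E = card (fib (\<phi> m)) + (\<Sum>C\<in>\<phi> ` E - {\<phi> m}. card (fib C))"
      using cardE sum.remove[OF finI mI] by simp
    also have "\<dots> \<le> 2 + 3 * card (\<phi> ` E - {\<phi> m})" using add_mono[OF f2 sum3] by simp
    also have "card (\<phi> ` E - {\<phi> m}) = card (\<phi> ` E) - 1" using mI finI by simp
    finally show ?thesis using cI cI1 by linarith
  qed
qed


lemma reps:
  assumes bi: "bi_ideal UNIV B" and ch: "R_chain B K" and finK: "finite K"
  shows "\<exists>E. schain B E \<and> finite E \<and> card E = card K"
proof -
  have cl: "closedm B" using bi by (rule bi_closed)
  define f where "f X = (SOME a. a \<in> B \<and> X = R_class B a)" for X
  have fX: "f X \<in> B \<and> X = R_class B (f X)" if "X \<in> K" for X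
  proof -
    have "X \<in> R_class B ` B" using ch that by (auto simp: R_chain_def R_classes_def)
    then have "\<exists>a. a \<in> B \<and> X = R_class B a" by blast
    then show ?thesis unfolding f_def by (rule someI_ex)
  qed
  have inj: "inj_on f K"
  proof (rule inj_onI)
    fix X Y assume "X \<in> K" "Y \<in> K" "f X = f Y"
    then show "X = Y" using fX by metis
  qed
  have le: "R_le B (f X) (f Y)" if H: "X \<in> K" "Y \<in> K" "R_class_le B X Y" for X Y
  proof -
    obtain a b where ab: "a \<in> X" "b \<in> Y" "R_le B a b" using H(3) by (auto simp: R_class_le_def)
    have "a \<in> R_class B (f X)" using fX[OF H(1)] ab(1) by simp
    then have 1: "R_le B (f X) a" by (simp add: R_class_def R_equiv_def)
    have "b \<in> R_class B (f Y)" using fX[OF H(2)] ab(2) by simp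
    then have 2: "R_le B b (f Y)" by (simp add: R_class_def R_equiv_def)
    show ?thesis using R_le_trans[OF cl R_le_trans[OF cl 1 ab(3)] 2] .
  qed
  have "schain B (f ` K)"
    unfolding schain_def
  proof (intro conjI ballI impI)
    show "f ` K \<subseteq> B" using fX by blast
  next
    fix x y assume "x \<in> f ` K" "y \<in> f ` K"
    then obtain X Y where XY: "X \<in> K" "Y \<in> K" "x = f X" "y = f Y" by blast
    have "R_class_le B X Y \<or> R_class_le B Y X" using ch XY by (auto simp: R_chain_def)
    then show "R_le B x y \<or> R_le B y x" using le XY by blast
  next
    fix x y assume "x \<in> f ` K" "y \<in> f ` K" "R_le B x y" "R_le B y x"
    then obtain X Y where XY: "X \<in> K" "Y \<in> K" "x = f X" "y = f Y" by blast
    have "R_equiv B x y" using \<open>R_le B x y\<close> \<open>R_le B y x\<close> by (simp add: R_equiv_def)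
    then have "R_class B x = R_class B y" using R_class_eq_iff[OF cl] fX XY by blast
    then have "X = Y" using fX XY by metis
    then show "x = y" using XY by simp
  qed
  then show ?thesis using inj finK card_image by blast
qed

lemma chain_subset: "R_chain A K \<Longrightarrow> K' \<subseteq> K \<Longrightarrow> R_chain A K'"
  unfolding R_chain_def by blast

theorem corollary3p2:
  fixes B :: "'a::semigroup_mult set"
  assumes "R_height (UNIV :: 'a set) < \<infinity>"
    and "bi_ideal (UNIV :: 'a set) B"
  shows "R_height B \<le> 3 * R_height (UNIV :: 'a set) - 1"
proof -
  obtain n where hn: "R_height (UNIV :: 'a set) = enat n" using assms(1) by (cases "R_height (UNIV :: 'a set)") auto
  have hS: "\<forall>K. finite K \<longrightarrow> R_chain (UNIV :: 'a set) K \<longrightarrow> card K \<le> n"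
  proof (intro allI impI)
    fix K :: "'a set set" assume "finite K" "R_chain UNIV K"
    then have "enat (card K) \<in> {(if finite K then enat (card K) else \<infinity>) | K. R_chain (UNIV :: 'a set) K}"
      by force
    then have "enat (card K) \<le> R_height (UNIV :: 'a set)" unfolding R_height_def by (rule Sup_upper)
    then show "card K \<le> n" using hn by simp
  qed
  have fb: "card K \<le> 3 * n - 1" if H: "R_chain B K" "finite K" for K
  proof -
    obtain E where "schain B E" "finite E" "card E = card K" using reps[OF assms(2) H] by blast
    then show ?thesis using count[OF assms(2) _ _ hS] by metis
  qed
  have "R_height B \<le> enat (3 * n - 1)"
    unfolding R_height_def
  proof (rule Sup_least)
    fix x assume "x \<in> {(if finite K then enat (card K) else \<infinity>) | K. R_chain B K}"
    then obtain K where K: "R_chain B K" "x = (if finite K then enat (card K) else \<infinity>)" by blast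
    show "x \<le> enat (3 * n - 1)"
    proof (cases "finite K")
      case True then show ?thesis using K fb by simp
    next
      case False
      then obtain K' where K': "finite K'" "card K' = 3 * n + 1" "K' \<subseteq> K"
        using infinite_arbitrarily_large by blast
      have "card K' \<le> 3 * n - 1" using fb[OF chain_subset[OF K(1) K'(3)] K'(1)] .
      then show ?thesis using K'(2) by simp
    qed
  qed
  also have "enat (3 * n - 1) = 3 * R_height (UNIV :: 'a set) - 1"
    unfolding hn by (simp add: numeral_eq_enat one_enat_def)
  finally show ?thesis .
qed

end
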